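(* Let $(\Gamma,\lambda)$ be a tree plan. For every $B\subseteq\Gamma(\omega)$, the model-theoretic algebraic closure of $B$ in the $\mathcal{L}_\Gamma$-structure $\Gamma(\omega)$ equals $\mathrm{tcl}(B)$.
   Context: Tree plans: a tree plan is a pair $(\Gamma,\lambda)$ where $\Gamma\subseteq\omega^{<\omega}$ is a finite set of finite sequences containing the empty sequence $\langle\rangle$ and closed under initial segments, and $\lambda:\Gamma\to\{1,\infty\}$ with $\lambda(\langle\rangle)=1$. $\Gamma(\omega)$ is the set of finite sequences $\langle(i_0,t_0),\dots,(i_n,t_n)\rangle$ (including the empty one) such that $\langle i_0,\dots,i_n\rangle\in\Gamma$ and for each $k\le n$: $t_k=\star$ (a fixed symbol not in $\omega$) if $\lambda(\langle i_0,\dots,i_k\rangle)=1$, and $t_k\in\omega$ if $\lambda(\langle i_0,\dots,i_k\rangle)=\infty$. It is a tree under the initial-segment order $\le$, in the language $\mathcal{L}_t$ with $\le$, root constant $\varepsilon$ (the empty sequence), meet $\sqcap$ and $\mathtt{pred}$ (delete last entry; $\mathtt{pred}(\varepsilon)=\varepsilon$). The map $\pi:\Gamma(\omega)\to\Gamma$ sends $\langle(i_0,t_0),\dots,(i_n,t_n)\rangle$ to $\langle i_0,\dots,i_n\rangle$. $\mathcal{L}_\Gamma$ is $\mathcal{L}_t$ plus unary predicates $P_\sigma$ ($\sigma\in\Gamma$) with $P_\sigma=\pi^{-1}(\sigma)$. Tree closure: for $B\subseteq\Gamma(\omega)$, $\mathrm{tcl}(B)$ is the smallest subset of $\Gamma(\omega)$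 containing $\varepsilon$ and every $a\le b$ with $b\in B$, such that whenever $a$ is in it, $a'\ne\varepsilon$, $\mathtt{pred}(a')=a$ and $\lambda(\pi(a'))=1$, then $a'$ is in it. *)

theory Defs
  imports Main "HOL-Library.Sublist"
begin

(* Labels of a tree plan: One = 1, Inf = \<infinity> *)
datatype lab = One | Inf

definition tree_plan :: "nat list set \<Rightarrow> (nat list \<Rightarrow> lab) \<Rightarrow> bool" where
  "tree_plan G lam \<longleftrightarrow> finite G \<and> [] \<in> G \<and>
     (\<forall>s\<in>G. \<forall>t. prefix t s \<longrightarrow> t \<in> G) \<and> lam [] = One"

(* elements of \<Gamma>(\<omega>): sequences of pairs (i_k, t_k); t_k = None encodes the symbol \<star>,
   t_k = Some n encodes n \<in> \<omega> *)
type_synonym node = "(nat \<times> nat option) list"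

definition piG :: "node \<Rightarrow> nat list" where
  "piG a = map fst a"

definition Gomega :: "nat list set \<Rightarrow> (nat list \<Rightarrow> lab) \<Rightarrow> node set" where
  "Gomega G lam = {a. map fst a \<in> G \<and>
     (\<forall>k < length a. (lam (take (Suc k) (map fst a)) = One \<longrightarrow> snd (a ! k) = None) \<and>
                     (lam (take (Suc k) (map fst a)) = Inf \<longrightarrow> snd (a ! k) \<noteq> None))}"

datatype trm = Var nat | Eps | Meet trm trm | Pred trm

datatype fm = Eq trm trm | Le trm trm | P "nat list" trm
  | Neg fm | Conj fm fm | Ex nat fm

primrec evalt :: "(nat \<Rightarrow> node) \<Rightarrow> trm \<Rightarrow> node" where
  "evalt e (Var x) = e x"
| "evalt e Eps = []"
| "evalt e (Meet s t) = longest_common_prefix (evalt e s) (evalt e t)"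
| "evalt e (Pred t) = butlast (evalt e t)"

primrec fvt :: "trm \<Rightarrow> nat set" where
  "fvt (Var x) = {x}"
| "fvt Eps = {}"
| "fvt (Meet s t) = fvt s \<union> fvt t"
| "fvt (Pred t) = fvt t"

primrec fv :: "fm \<Rightarrow> nat set" where
  "fv (Eq s t) = fvt s \<union> fvt t"
| "fv (Le s t) = fvt s \<union> fvt t"
| "fv (P \<sigma> t) = fvt t"
| "fv (Neg f) = fv f"
| "fv (Conj f g) = fv f \<union> fv g"
| "fv (Ex x f) = fv f - {x}"

primrec sat :: "nat list set \<Rightarrow> (nat list \<Rightarrow> lab) \<Rightarrow> (nat \<Rightarrow> node) \<Rightarrow> fm \<Rightarrow> bool" where
  "sat G lam e (Eq s t) = (evalt e s = evalt e t)"
| "sat G lam e (Le s t) = prefix (evalt e s) (evalt e t)"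
| "sat G lam e (P \<sigma> t) = (\<sigma> \<in> G \<and> piG (evalt e t) = \<sigma>)"
| "sat G lam e (Neg f) = (\<not> sat G lam e f)"
| "sat G lam e (Conj f g) = (sat G lam e f \<and> sat G lam e g)"
| "sat G lam e (Ex x f) = (\<exists>a\<in>Gomega G lam. sat G lam (e(x := a)) f)"

definition acl :: "nat list set \<Rightarrow> (nat list \<Rightarrow> lab) \<Rightarrow> node set \<Rightarrow> node set" where
  "acl G lam B = {a \<in> Gomega G lam. \<exists>\<phi> x e.
      (\<forall>y \<in> fv \<phi> - {x}. e y \<in> B) \<and>
      sat G lam (e(x := a)) \<phi> \<and>
      finite {c \<in> Gomega G lam. sat G lam (e(x := c)) \<phi>}}"

inductive_set tcl :: "nat list set \<Rightarrow> (nat list \<Rightarrow> lab) \<Rightarrow> node set \<Rightarrow> node set"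
  for G lam B where
  tcl_eps: "[] \<in> tcl G lam B"
| tcl_below: "b \<in> B \<Longrightarrow> prefix a b \<Longrightarrow> a \<in> tcl G lam B"
| tcl_succ: "a \<in> tcl G lam B \<Longrightarrow> a' \<in> Gomega G lam \<Longrightarrow> a' \<noteq> [] \<Longrightarrow>
             butlast a' = a \<Longrightarrow> lam (piG a') = One \<Longrightarrow> a' \<in> tcl G lam B"

end

theory Submission
  imports Defs
begin


lemma evalt_cong: "(\<forall>y\<in>fvt t. e y = e' y) \<Longrightarrow> evalt e t = evalt e' t"
  by (induction t) auto

lemma sat_cong: "(\<forall>y\<in>fv \<phi>. e y = e' y) \<Longrightarrow> sat G lam e \<phi> = sat G lam e' \<phi>"
proof (induction \<phi> arbitrary: e e')
  case (Ex x \<phi>)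
  have "\<And>a. sat G lam (e(x:=a)) \<phi> = sat G lam (e'(x:=a)) \<phi>"
    using Ex.prems by (intro Ex.IH) auto
  then show ?case by simp
next
  case (Neg \<phi>) then show ?case by simp
next
  case (Conj \<phi>1 \<phi>2)
  then have "sat G lam e \<phi>1 = sat G lam e' \<phi>1" "sat G lam e \<phi>2 = sat G lam e' \<phi>2" by auto
  then show ?case by simp
next
  case (Eq s t)
  then have "evalt e s = evalt e' s" "evalt e t = evalt e' t" by (auto intro!: evalt_cong)
  then show ?case by simp
next
  case (Le s t)
  then have "evalt e s = evalt e' s" "evalt e t = evalt e' t" by (auto intro!: evalt_cong)
  then show ?case by simp
next
  case (P \<sigma> t)
  then have "evalt e t = evalt e' t" by (auto intro!: evalt_cong)
  then show ?case by simp
qed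

lemma finite_fvt: "finite (fvt t)" by (induction t) auto
lemma finite_fv: "finite (fv \<phi>)" by (induction \<phi>) (auto simp: finite_fvt)

lemma sat_auto:
  assumes pre: "\<And>c d. prefix (f c) (f d) \<longleftrightarrow> prefix c d"
    and inv: "\<And>c. f (f c) = c"
    and bl: "\<And>c. butlast (f c) = f (butlast c)"
    and nil: "f [] = []"
    and mf: "\<And>c. map fst (f c) = map fst c"
    and gom: "\<And>c. f c \<in> Gomega G lam \<longleftrightarrow> c \<in> Gomega G lam"
  shows "sat G lam (f \<circ> e) \<phi> = sat G lam e \<phi>"
proof -
  have lcp: "longest_common_prefix (f c) (f d) = f (longest_common_prefix c d)" for c d
  proof -
    have "prefix w (longest_common_prefix (f c) (f d)) \<longleftrightarrow> prefix w (f (longest_common_prefix c d))" for w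
    proof -
      have "prefix w (longest_common_prefix (f c) (f d)) \<longleftrightarrow> prefix w (f c) \<and> prefix w (f d)"
        by (meson longest_common_prefix_max_prefix longest_common_prefix_prefix1
              longest_common_prefix_prefix2 prefix_order.trans)
      also have "\<dots> \<longleftrightarrow> prefix (f w) c \<and> prefix (f w) d"
        by (metis pre inv)
      also have "\<dots> \<longleftrightarrow> prefix (f w) (longest_common_prefix c d)"
        by (meson longest_common_prefix_max_prefix longest_common_prefix_prefix1
              longest_common_prefix_prefix2 prefix_order.trans)
      also have "\<dots> \<longleftrightarrow> prefix w (f (longest_common_prefix c d))"
        by (metis pre inv)
      finally show ?thesis .
    qed
    then show ?thesis by (meson prefix_order.antisym prefix_order.refl)
  qed
  have ev: "evalt (f \<circ> e) t = f (evalt e t)" for e t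
    by (induction t) (auto simp: nil lcp bl)
  show ?thesis
  proof (induction \<phi> arbitrary: e)
    case (Ex x \<phi>)
    have eq: "(f \<circ> e)(x := a) = f \<circ> (e(x := f a))" for a
      by (auto simp: inv)
    have e1: "sat G lam ((f \<circ> e)(x := a)) \<phi> = sat G lam (e(x := f a)) \<phi>" for a
      by (metis eq Ex.IH)
    have "sat G lam (f \<circ> e) (Ex x \<phi>) \<longleftrightarrow> (\<exists>a\<in>Gomega G lam. sat G lam ((f \<circ> e)(x := a)) \<phi>)"
      by simp
    also have "\<dots> \<longleftrightarrow> (\<exists>a\<in>Gomega G lam. sat G lam (e(x := f a)) \<phi>)"
      using e1 by simp
    also have "\<dots> \<longleftrightarrow> (\<exists>a\<in>Gomega G lam. sat G lam (e(x := a)) \<phi>)"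
      by (metis gom inv)
    finally show ?case by (simp add: comp_def)
  qed (auto simp: ev pre piG_def mf, metis inv)
qed



definition swp :: "node \<Rightarrow> (nat \<times> nat option) \<Rightarrow> (nat \<times> nat option) \<Rightarrow> node \<Rightarrow> node" where
  "swp p u v c = (if prefix (p@[u]) c then p@[v]@drop (Suc (length p)) c
     else if prefix (p@[v]) c then p@[u]@drop (Suc (length p)) c else c)"

lemma pre_pu[simp]: "prefix (p@[u]) (p@[v]@r) \<longleftrightarrow> u = v"
  by (auto simp: prefix_def)

lemma swp_u: "c = p@[u]@r \<Longrightarrow> swp p u v c = p@[v]@r"
  unfolding swp_def by simp
lemma swp_v: "u \<noteq> v \<Longrightarrow> c = p@[v]@r \<Longrightarrow> swp p u v c = p@[u]@r"
  unfolding swp_def by simp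
lemma swp_o: "\<not> prefix (p@[u]) c \<Longrightarrow> \<not> prefix (p@[v]) c \<Longrightarrow> swp p u v c = c"
  unfolding swp_def by simp

lemma swp_cases:
  obtains r where "c = p@[u]@r" | r where "c = p@[v]@r" | "\<not> prefix (p@[u]) c" "\<not> prefix (p@[v]) c"
  by (metis prefixE append_assoc)

lemma swp_sym: "u \<noteq> v \<Longrightarrow> swp p u v c = swp p v u c"
  by (rule swp_cases[where c=c and p=p and u=u and v=v]) (auto simp: swp_u swp_v swp_o)

lemma swp_inv: "u \<noteq> v \<Longrightarrow> swp p u v (swp p u v c) = c"
  by (rule swp_cases[where c=c and p=p and u=u and v=v]) (auto simp: swp_u swp_v swp_o)

lemma swp_nil: "swp p u v [] = []"
  unfolding swp_def by auto

lemma not_pre_short[simp]: "\<not> prefix (p@[u]) p"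
  using prefix_length_le by fastforce

lemma swp_mono: assumes uv: "u \<noteq> v" and cd: "prefix c d" shows "prefix (swp p u v c) (swp p u v d)"
proof (rule swp_cases[where c=c and p=p and u=u and v=v])
  fix r assume c: "c = p@[u]@r"
  then obtain s where "d = p@[u]@r@s" using cd by (auto simp: prefix_def)
  then show ?thesis using c by (simp add: swp_u)
next
  fix r assume c: "c = p@[v]@r"
  then obtain s where "d = p@[v]@r@s" using cd by (auto simp: prefix_def)
  then show ?thesis using c uv by (simp add: swp_v)
next
  assume nu: "\<not> prefix (p@[u]) c" and nv: "\<not> prefix (p@[v]) c"
  then have fc: "swp p u v c = c" by (rule swp_o)
  have key: "prefix c p" if "prefix (p@[w]) d" "w = u \<or> w = v" for w
  proof -
    have "prefix c (p@[w]) \<or> prefix (p@[w]) c" using cd that(1) prefix_same_cases by blast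
    then show ?thesis using that(2) nu nv by auto
  qed
  show ?thesis
  proof (rule swp_cases[where c=d and p=p and u=u and v=v])
    fix r assume d: "d = p@[u]@r"
    then have "prefix c p" using key[of u] by simp
    then show ?thesis using d fc swp_u[OF d, of v] by (auto intro: prefix_order.trans)
  next
    fix r assume d: "d = p@[v]@r"
    then have "prefix c p" using key[of v] by simp
    then show ?thesis using d fc swp_v[OF uv d] by (auto intro: prefix_order.trans)
  next
    assume "\<not> prefix (p@[u]) d" "\<not> prefix (p@[v]) d"
    then show ?thesis using fc cd swp_o by metis
  qed
qed

lemma swp_prefix_iff: "u \<noteq> v \<Longrightarrow> prefix (swp p u v c) (swp p u v d) \<longleftrightarrow> prefix c d"
  by (metis swp_mono swp_inv)

lemma swp_butlast_u: "c = p@[u]@r \<Longrightarrow> butlast (swp p u v c) = swp p u v (butlast c)"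
proof (cases "r = []")
  case True
  assume c: "c = p@[u]@r"
  then show ?thesis using True by (simp add: swp_u swp_o)
next
  case False
  assume c: "c = p@[u]@r"
  then have "butlast c = p@[u]@butlast r" using False by (simp add: butlast_append)
  then show ?thesis using c False by (simp add: swp_u butlast_append)
qed

lemma swp_butlast: assumes uv: "u \<noteq> v" shows "butlast (swp p u v c) = swp p u v (butlast c)"
proof (rule swp_cases[where c=c and p=p and u=u and v=v])
  fix r assume "c = p@[u]@r" then show ?thesis by (rule swp_butlast_u)
next
  fix r assume "c = p@[v]@r" then show ?thesis using swp_butlast_u[of c p v r u] swp_sym uv by metis
next
  assume nu: "\<not> prefix (p@[u]) c" and nv: "\<not> prefix (p@[v]) c"
  then have "\<not> prefix (p@[u]) (butlast c)" "\<not> prefix (p@[v]) (butlast c)"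
    by (meson prefixeq_butlast prefix_order.trans)+
  then show ?thesis using nu nv by (simp add: swp_o)
qed

lemma swp_map_fst: "fst u = fst v \<Longrightarrow> map fst (swp p u v c) = map fst c"
  by (rule swp_cases[where c=c and p=p and u=u and v=v]) (auto simp: swp_u swp_v swp_o swp_def)

lemma swp_map_snd: "(snd u = None) = (snd v = None) \<Longrightarrow>
   map (\<lambda>x. snd x = None) (swp p u v c) = map (\<lambda>x. snd x = None) c"
  by (rule swp_cases[where c=c and p=p and u=u and v=v]) (auto simp: swp_u swp_v swp_o swp_def)



lemma Gomega_prefix:
  assumes tp: "tree_plan G lam" and b: "b \<in> Gomega G lam" and ab: "prefix a b"
  shows "a \<in> Gomega G lam"
proof -
  obtain r where br: "b = a @ r" using ab prefixE by blast
  have mb: "map fst b = map fst a @ map fst r" using br by simp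
  have G: "map fst a \<in> G" using tp b mb unfolding tree_plan_def Gomega_def by auto
  have "(lam (take (Suc k) (map fst a)) = One \<longrightarrow> snd (a ! k) = None) \<and>
        (lam (take (Suc k) (map fst a)) = Inf \<longrightarrow> snd (a ! k) \<noteq> None)" if k: "k < length a" for k
  proof -
    have "take (Suc k) (map fst b) = take (Suc k) (map fst a)" using mb k by simp
    moreover have "b ! k = a ! k" using br k by (simp add: nth_append)
    moreover have "k < length b" using br k by simp
    moreover have "\<forall>k<length b. (lam (take (Suc k) (map fst b)) = One \<longrightarrow> snd (b!k) = None) \<and>
       (lam (take (Suc k) (map fst b)) = Inf \<longrightarrow> snd (b!k) \<noteq> None)"
      using b by (simp add: Gomega_def)
    ultimately show ?thesis by metis
  qed
  then show ?thesis using G unfolding Gomega_def by auto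
qed

lemma tcl_Gomega:
  assumes tp: "tree_plan G lam" and B: "B \<subseteq> Gomega G lam" and a: "a \<in> tcl G lam B"
  shows "a \<in> Gomega G lam"
  using a
proof induction
  case tcl_eps
  then show ?case using tp unfolding tree_plan_def Gomega_def by auto
next
  case (tcl_below b a)
  then show ?case using Gomega_prefix[OF tp] B by blast
qed auto

lemma tcl_inv:
  assumes "a \<in> tcl G lam B"
  shows "\<exists>a0. prefix a0 a \<and> (a0 = [] \<or> (\<exists>b\<in>B. prefix a0 b)) \<and>
     (\<forall>j. length a0 \<le> j \<and> j < length a \<longrightarrow> lam (take (Suc j) (map fst a)) = One)"
  using assms
proof induction
  case tcl_eps
  then show ?case by auto
next
  case (tcl_below b a)
  then show ?case by auto
next
  case (tcl_succ a a')
  then obtain a0 where a0: "prefix a0 a" "a0 = [] \<or> (\<exists>b\<in>B. prefix a0 b)"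
     "\<forall>j. length a0 \<le> j \<and> j < length a \<longrightarrow> lam (take (Suc j) (map fst a)) = One" by blast
  obtain x where a': "a' = a @ [x]" using tcl_succ by (metis append_butlast_last_id)
  have "lam (take (Suc j) (map fst a')) = One" if "length a0 \<le> j" "j < length a'" for j
  proof (cases "j < length a")
    case True
    then have "take (Suc j) (map fst a') = take (Suc j) (map fst a)" using a'
      by simp
    then show ?thesis using a0(3) that True by simp
  next
    case False
    then have "j = length a" using that a' by (metis length_append_singleton less_Suc_eq)
    then have "take (Suc j) (map fst a') = map fst a'" using a' by simp
    then show ?thesis using tcl_succ by (simp add: piG_def)
  qed
  moreover have "prefix a0 a'" using a0(1) a' by (metis prefix_order.trans prefix_snoc prefix_order.refl)
  ultimately show ?case using a0(2) by blast
qed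

lemma unique_node:
  assumes a: "a \<in> Gomega G lam" and c: "c \<in> Gomega G lam" and m: "map fst c = map fst a"
    and pa: "prefix a0 a" and pc: "prefix a0 c"
    and one: "\<forall>j. length a0 \<le> j \<and> j < length a \<longrightarrow> lam (take (Suc j) (map fst a)) = One"
  shows "c = a"
proof (rule nth_equalityI)
  show len: "length c = length a" using m by (metis length_map)
  fix j assume j: "j < length c"
  show "c ! j = a ! j"
  proof (cases "j < length a0")
    case True
    obtain r s where "a = a0 @ r" "c = a0 @ s" using pa pc prefixE by metis
    then show ?thesis using True by (simp add: nth_append)
  next
    case False
    have f: "fst (c!j) = fst (a!j)" using m j len by (metis nth_map)
    have l: "lam (take (Suc j) (map fst a)) = One" using one False j len by simp
    have "snd (a!j) = None" using a l j len unfolding Gomega_def by auto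
    moreover have "snd (c!j) = None" using c l j m unfolding Gomega_def by auto
    ultimately show ?thesis using f by (simp add: prod_eq_iff)
  qed
qed

lemma butlast_pow: "(butlast ^^ m) b = take (length b - m) b"
  by (induction m) (auto simp: butlast_take)

lemma evalt_pred_pow: "evalt e ((Pred ^^ m) t) = (butlast ^^ m) (evalt e t)"
  by (induction m) auto

lemma fvt_pred_pow: "fvt ((Pred ^^ m) t) = fvt t"
  by (induction m) auto

lemma acl_from_term:
  assumes tp: "tree_plan G lam" and aG: "a \<in> Gomega G lam" and pa: "prefix a0 a"
    and one: "\<forall>j. length a0 \<le> j \<and> j < length a \<longrightarrow> lam (take (Suc j) (map fst a)) = One"
    and t: "\<forall>y\<in>fvt t. e y \<in> B" "0 \<notin> fvt t" "evalt e t = a0"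
  shows "a \<in> acl G lam B"
proof -
  define \<phi> where "\<phi> = Conj (Le t (Var 0)) (P (piG a) (Var 0))"
  have ev: "evalt (e(0:=c)) t = a0" for c using t(2,3) evalt_cong[of t "e(0:=c)" e] by auto
  have sat: "sat G lam (e(0:=c)) \<phi> \<longleftrightarrow> prefix a0 c \<and> piG a \<in> G \<and> piG c = piG a" for c
    unfolding \<phi>_def by (simp add: ev)
  have "{c \<in> Gomega G lam. sat G lam (e(0:=c)) \<phi>} \<subseteq> {a}"
    using sat unique_node[OF aG _ _ pa _ one] by (auto simp: piG_def)
  then have fin: "finite {c \<in> Gomega G lam. sat G lam (e(0:=c)) \<phi>}" using finite_subset by blast
  have "piG a \<in> G" using aG unfolding Gomega_def piG_def by auto
  then have sa: "sat G lam (e(0:=a)) \<phi>" using sat pa by simp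
  have "\<forall>y \<in> fv \<phi> - {0}. e y \<in> B" using t(1) unfolding \<phi>_def by auto
  then show ?thesis using aG sa fin unfolding acl_def by blast
qed

lemma tcl_acl:
  assumes tp: "tree_plan G lam" and B: "B \<subseteq> Gomega G lam" and a: "a \<in> tcl G lam B"
  shows "a \<in> acl G lam B"
proof -
  have aG: "a \<in> Gomega G lam" using tcl_Gomega[OF tp B a] .
  obtain a0 where a0: "prefix a0 a" "a0 = [] \<or> (\<exists>b\<in>B. prefix a0 b)"
     "\<forall>j. length a0 \<le> j \<and> j < length a \<longrightarrow> lam (take (Suc j) (map fst a)) = One"
    using tcl_inv[OF a] by blast
  show ?thesis
  proof (cases "a0 = []")
    case True
    show ?thesis by (rule acl_from_term[OF tp aG a0(1) a0(3), of Eps]) (auto simp: True)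
  next
    case False
    then obtain b where b: "b \<in> B" "prefix a0 b" using a0(2) by blast
    have "evalt (\<lambda>_. b) ((Pred ^^ (length b - length a0)) (Var 1)) = a0"
    proof -
      obtain r where "b = a0 @ r" using b(2) prefixE by metis
      then show ?thesis by (simp add: evalt_pred_pow butlast_pow)
    qed
    then show ?thesis using b
      by (intro acl_from_term[OF tp aG a0(1) a0(3), of "(Pred ^^ (length b - length a0)) (Var 1)" "\<lambda>_. b"])
         (auto simp: fvt_pred_pow)
  qed
qed



lemma Gomega_cong:
  assumes "map fst c = map fst d" "map (\<lambda>x. snd x = None) c = map (\<lambda>x. snd x = None) d"
  shows "c \<in> Gomega G lam \<longleftrightarrow> d \<in> Gomega G lam"
proof -
  have len: "length c = length d" using arg_cong[OF assms(1), of length] by simp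
  have eqk: "(snd (c!k) = None) = (snd (d!k) = None)" if k: "k < length d" for k
  proof -
    have "map (\<lambda>x. snd x = None) c ! k = map (\<lambda>x. snd x = None) d ! k" using assms(2) by simp
    then show ?thesis using k len by simp
  qed
  have "(\<forall>k < length c. (lam (take (Suc k) (map fst c)) = One \<longrightarrow> snd (c ! k) = None) \<and>
                     (lam (take (Suc k) (map fst c)) = Inf \<longrightarrow> snd (c ! k) \<noteq> None)) =
        (\<forall>k < length d. (lam (take (Suc k) (map fst d)) = One \<longrightarrow> snd (d ! k) = None) \<and>
                     (lam (take (Suc k) (map fst d)) = Inf \<longrightarrow> snd (d ! k) \<noteq> None))"
    unfolding len assms(1) using eqk by (intro all_cong) simp
  then show ?thesis unfolding Gomega_def mem_Collect_eq assms(1) by simp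
qed

lemma swp_Gomega:
  assumes "fst u = fst v" "(snd u = None) = (snd v = None)"
  shows "swp p u v c \<in> Gomega G lam \<longleftrightarrow> c \<in> Gomega G lam"
  by (rule Gomega_cong) (auto simp: assms swp_map_fst swp_map_snd)

lemma sat_swp:
  assumes "u \<noteq> v" "fst u = fst v" "(snd u = None) = (snd v = None)"
  shows "sat G lam (swp p u v \<circ> e) \<phi> = sat G lam e \<phi>"
  by (rule sat_auto[OF swp_prefix_iff[OF assms(1)] swp_inv[OF assms(1)] swp_butlast[OF assms(1)]
     swp_nil swp_map_fst[OF assms(2)] swp_Gomega[OF assms(2,3)]])

lemma tcl_mono: "B0 \<subseteq> B \<Longrightarrow> a \<in> tcl G lam B0 \<Longrightarrow> a \<in> tcl G lam B"
proof -
  assume sub: "B0 \<subseteq> B"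
  assume "a \<in> tcl G lam B0"
  then show "a \<in> tcl G lam B"
  proof induction
    case tcl_eps then show ?case by (rule tcl.tcl_eps)
  next
    case (tcl_below b a) then show ?case using sub by (meson subsetD tcl.tcl_below)
  next
    case (tcl_succ a a') then show ?case by (meson tcl.tcl_succ)
  qed
qed

lemma acl_tcl:
  assumes tp: "tree_plan G lam" and B: "B \<subseteq> Gomega G lam" and aa: "a \<in> acl G lam B"
  shows "a \<in> tcl G lam B"
proof (rule ccontr)
  assume na: "a \<notin> tcl G lam B"
  from aa obtain \<phi> x e where aG: "a \<in> Gomega G lam" and par: "\<forall>y \<in> fv \<phi> - {x}. e y \<in> B"
    and sa: "sat G lam (e(x := a)) \<phi>" and fin: "finite {c \<in> Gomega G lam. sat G lam (e(x := c)) \<phi>}"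
    unfolding acl_def by blast
  define B0 where "B0 = e ` (fv \<phi> - {x})"
  have B0fin: "finite B0" unfolding B0_def using finite_fv by blast
  have B0B: "B0 \<subseteq> B" unfolding B0_def using par by blast
  define J where "J = {j. take j a \<notin> tcl G lam B}"
  have lenJ: "length a \<in> J" unfolding J_def using na by simp
  define j where "j = (LEAST j. j \<in> J)"
  have jJ: "j \<in> J" unfolding j_def using lenJ by (rule LeastI)
  have jle: "j \<le> length a" unfolding j_def using lenJ by (rule Least_le)
  have "j \<noteq> 0" using jJ unfolding J_def by (metis mem_Collect_eq take0 tcl.tcl_eps)
  then obtain k where jk: "j = Suc k" using not0_implies_Suc by blast
  have kt: "take k a \<in> tcl G lam B"
  proof -
    have "k \<notin> J" unfolding j_def using not_less_Least[of k "\<lambda>j. j \<in> J"] jk j_def by simp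
    then show ?thesis unfolding J_def by simp
  qed
  have kl: "k < length a" using jle jk by simp
  define p where "p = take k a"
  define w where "w = a ! k"
  have lp: "length p = k" unfolding p_def using kl by simp
  have q: "take (Suc k) a = p @ [w]" unfolding p_def w_def using kl by (simp add: take_Suc_conv_app_nth)
  have qn: "p @ [w] \<notin> tcl G lam B" using jJ jk q unfolding J_def by simp
  have qG: "p @ [w] \<in> Gomega G lam" using Gomega_prefix[OF tp aG take_is_prefix[of "Suc k" a]] q by simp
  have lamq: "lam (take (Suc k) (map fst a)) = lam (piG (p @ [w]))" using q by (simp add: piG_def take_map)
  have "lam (piG (p @ [w])) \<noteq> One"
  proof
    assume one: "lam (piG (p @ [w])) = One"
    have "p @ [w] \<in> tcl G lam B" by (rule tcl.tcl_succ[OF kt[folded p_def] qG _ _ one]) simp_all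
    then show False using qn by simp
  qed
  then have "lam (take (Suc k) (map fst a)) = Inf" using lamq by (cases "lam (piG (p @ [w]))") auto
  moreover have "\<forall>k<length a. (lam (take (Suc k) (map fst a)) = One \<longrightarrow> snd (a!k) = None) \<and>
       (lam (take (Suc k) (map fst a)) = Inf \<longrightarrow> snd (a!k) \<noteq> None)"
    using aG by (simp add: Gomega_def)
  ultimately have "snd (a ! k) \<noteq> None" using kl by blast
  then obtain n where wn: "snd w = Some n" unfolding w_def by auto
  have nob: "\<not> prefix (p @ [w]) b" if "b \<in> B" for b
    using that qn tcl.tcl_below by metis
  define M where "M = {m. \<exists>b\<in>B0. prefix (p @ [(fst w, Some m)]) b}"
  have "M \<subseteq> (\<lambda>b. the (snd (b ! k))) ` B0"
  proof
    fix m assume "m \<in> M"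
    then obtain b where b: "b \<in> B0" "prefix (p @ [(fst w, Some m)]) b" unfolding M_def by blast
    then obtain r where "b = p @ [(fst w, Some m)] @ r" using prefixE by (metis append_assoc)
    then have "the (snd (b ! k)) = m" using lp by (simp add: nth_append)
    then show "m \<in> (\<lambda>b. the (snd (b ! k))) ` B0" using b by blast
  qed
  then have Mfin: "finite M" using B0fin finite_subset by blast
  define g where "g m = p @ [(fst w, Some m)] @ drop (Suc k) a" for m
  have ginj: "inj g" unfolding g_def inj_def by simp
  have adec: "a = p @ [w] @ drop (Suc k) a"
  proof -
    have "a = take (Suc k) a @ drop (Suc k) a" by simp
    then show ?thesis using q by simp
  qed
  have gS: "g m \<in> {c \<in> Gomega G lam. sat G lam (e(x := c)) \<phi>}" if m: "m \<notin> M" "m \<noteq> n" for m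
  proof -
    define v where "v = (fst w, Some m)"
    have uv: "w \<noteq> v" using wn m(2) unfolding v_def by (metis snd_conv option.inject)
    have fv: "fst w = fst v" "(snd w = None) = (snd v = None)" unfolding v_def using wn by auto
    have fa: "swp p w v a = g m" using swp_u[OF adec] unfolding g_def v_def by simp
    have fixB: "swp p w v b = b" if "b \<in> B0" for b
    proof (rule swp_o)
      show "\<not> prefix (p @ [w]) b" using nob that B0B by blast
      show "\<not> prefix (p @ [v]) b" using m(1) that unfolding M_def v_def by blast
    qed
    have "sat G lam (swp p w v \<circ> e(x := a)) \<phi>" using sa sat_swp[OF uv fv] by blast
    moreover have "\<forall>y\<in>fv \<phi>. (swp p w v \<circ> e(x := a)) y = (e(x := g m)) y"
      using fa fixB unfolding B0_def by auto
    ultimately have "sat G lam (e(x := g m)) \<phi>" using sat_cong[of \<phi> "swp p w v \<circ> e(x := a)" "e(x := g m)" G lam] by simp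
    moreover have "g m \<in> Gomega G lam" using fa aG swp_Gomega[OF fv] by metis
    ultimately show ?thesis by blast
  qed
  have "infinite (UNIV - (M \<union> {n}))" using Mfin by (simp add: Diff_infinite_finite)
  then have "infinite (g ` (UNIV - (M \<union> {n})))" using ginj finite_imageD inj_on_subset by blast
  moreover have "g ` (UNIV - (M \<union> {n})) \<subseteq> {c \<in> Gomega G lam. sat G lam (e(x := c)) \<phi>}"
    using gS by blast
  ultimately show False using fin finite_subset by blast
qed

theorem mainTheorem17:
  assumes "tree_plan G lam"
    and "B \<subseteq> Gomega G lam"
  shows "acl G lam B = tcl G lam B"
  using acl_tcl[OF assms] tcl_acl[OF assms] by blast

end
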